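(* Let $I,S,C\subseteq G$ be pairwise disjoint. Then $I$ is AD-separated from $S$ by $C$ if and only if there exists a closed subset $K$ of $G$ such that $S\subseteq K$, $P(K)\subseteq C$, $I\subseteq N'(K)$ and $D(K)\cap C=\emptyset$.
   Context: $G$ is a finite set of nodes forming a DAG. $P(s)$: parents of $s$; $s\sqsubseteq v$: directed path (possibly trivial) from $s$ to $v$; $s\sqsubset v$: additionally $s\neq v$; $D(s)=\{v:s\sqsubset v\}$. For $K\subseteq G$: $P(K)=(\bigcup_{s\in K}P(s))\setminus K$, $D(K)=(\bigcup_{s\in K}D(s))\setminus K$, $N(K)=G\setminus(K\cup D(K))$, $N'(K)=N(K)\setminus P(K)$; $K$ is closed if $s\sqsubseteq k\sqsubseteq t$ with $s,t\in K$, $k\in G$ implies $k\in K$. A path $s_1,\dots,s_n$ ($n\geq1$) is a sequence of nodes in which consecutive nodes are joined by an edge in either direction. It is blocked by $C\subseteq G$ if at least one holds: (B1) $s_1\in C$; (B2) some $s_i$ with $1<i<n$ has $s_i\to s_{i+1}$ and $s_i\in C$; (B3) some $s_i$ with $1<i<n$ has $s_{i-1}\to s_i\leftarrow s_{i+1}$, $s_i\notin C$ and $D(s_i)\cap C=\emptyset$; (B4) $s_n\in C$. $I$ is AD-separated from $S$ by $C$ if every path $i=s_1,\dots,s_n=s$ ($n\ge1$) from any $i\in I$ to any $s\in S$ is blocked by $C$. *)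

theory Defs
  imports Main
begin

definition is_dag :: "'a set \<Rightarrow> ('a \<Rightarrow> 'a \<Rightarrow> bool) \<Rightarrow> bool" where
  "is_dag G E \<longleftrightarrow> finite G \<and> (\<forall>a b. E a b \<longrightarrow> a \<in> G \<and> b \<in> G)
     \<and> (\<forall>a. \<not> (E\<^sup>+\<^sup>+ a a))"

definition par :: "'a set \<Rightarrow> ('a \<Rightarrow> 'a \<Rightarrow> bool) \<Rightarrow> 'a \<Rightarrow> 'a set" where
  "par G E s = {p \<in> G. E p s}"

definition dle :: "'a set \<Rightarrow> ('a \<Rightarrow> 'a \<Rightarrow> bool) \<Rightarrow> 'a \<Rightarrow> 'a \<Rightarrow> bool" where
  "dle G E s v \<longleftrightarrow> s \<in> G \<and> v \<in> G \<and> E\<^sup>*\<^sup>* s v"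

definition dlt :: "'a set \<Rightarrow> ('a \<Rightarrow> 'a \<Rightarrow> bool) \<Rightarrow> 'a \<Rightarrow> 'a \<Rightarrow> bool" where
  "dlt G E s v \<longleftrightarrow> dle G E s v \<and> s \<noteq> v"

definition desc :: "'a set \<Rightarrow> ('a \<Rightarrow> 'a \<Rightarrow> bool) \<Rightarrow> 'a \<Rightarrow> 'a set" where
  "desc G E s = {v \<in> G. dlt G E s v}"

definition parS :: "'a set \<Rightarrow> ('a \<Rightarrow> 'a \<Rightarrow> bool) \<Rightarrow> 'a set \<Rightarrow> 'a set" where
  "parS G E K = (\<Union>s\<in>K. par G E s) - K"

definition descS :: "'a set \<Rightarrow> ('a \<Rightarrow> 'a \<Rightarrow> bool) \<Rightarrow> 'a set \<Rightarrow> 'a set" where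
  "descS G E K = (\<Union>s\<in>K. desc G E s) - K"

definition nonD :: "'a set \<Rightarrow> ('a \<Rightarrow> 'a \<Rightarrow> bool) \<Rightarrow> 'a set \<Rightarrow> 'a set" where
  "nonD G E K = G - (K \<union> descS G E K)"

definition nonDP :: "'a set \<Rightarrow> ('a \<Rightarrow> 'a \<Rightarrow> bool) \<Rightarrow> 'a set \<Rightarrow> 'a set" where
  "nonDP G E K = nonD G E K - parS G E K"

definition closed_set :: "'a set \<Rightarrow> ('a \<Rightarrow> 'a \<Rightarrow> bool) \<Rightarrow> 'a set \<Rightarrow> bool" where
  "closed_set G E K \<longleftrightarrow> (\<forall>s t k. s \<in> K \<and> t \<in> K \<and> k \<in> G \<and> dle G E s k \<and> dle G E k t \<longrightarrow> k \<in> K)"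

text \<open>A path s_1..s_n (n \<ge> 1) as a nonempty list; xs ! (i-1) is s_i.\<close>
definition is_path :: "'a set \<Rightarrow> ('a \<Rightarrow> 'a \<Rightarrow> bool) \<Rightarrow> 'a list \<Rightarrow> bool" where
  "is_path G E xs \<longleftrightarrow> xs \<noteq> [] \<and> set xs \<subseteq> G \<and>
     (\<forall>j. j + 1 < length xs \<longrightarrow> E (xs ! j) (xs ! (j + 1)) \<or> E (xs ! (j + 1)) (xs ! j))"

text \<open>Blocking, with 0-based indices: inner positions are 0 < j < length xs - 1.\<close>
definition blocked :: "'a set \<Rightarrow> ('a \<Rightarrow> 'a \<Rightarrow> bool) \<Rightarrow> 'a set \<Rightarrow> 'a list \<Rightarrow> bool" where
  "blocked G E C xs \<longleftrightarrow>
     hd xs \<in> C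
   \<or> (\<exists>j. 0 < j \<and> j + 1 < length xs \<and> E (xs ! j) (xs ! (j + 1)) \<and> xs ! j \<in> C)
   \<or> (\<exists>j. 0 < j \<and> j + 1 < length xs \<and> E (xs ! (j - 1)) (xs ! j) \<and> E (xs ! (j + 1)) (xs ! j)
          \<and> xs ! j \<notin> C \<and> desc G E (xs ! j) \<inter> C = {})
   \<or> last xs \<in> C"

definition AD_separated :: "'a set \<Rightarrow> ('a \<Rightarrow> 'a \<Rightarrow> bool) \<Rightarrow> 'a set \<Rightarrow> 'a set \<Rightarrow> 'a set \<Rightarrow> bool" where
  "AD_separated G E I S C \<longleftrightarrow>
     (\<forall>xs. is_path G E xs \<and> hd xs \<in> I \<and> last xs \<in> S \<longrightarrow> blocked G E C xs)"

end

theory Submission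
  imports Defs
begin

lemma dag_asym:
  assumes "is_dag G E" "E a b" shows "\<not> E b a"
proof
  assume "E b a"
  hence "E\<^sup>+\<^sup>+ a a" using assms(2) by (meson tranclp.r_into_trancl tranclp.trancl_into_trancl)
  thus False using assms(1) unfolding is_dag_def by blast
qed

lemma dag_G: assumes "is_dag G E" "E a b" shows "a \<in> G" "b \<in> G"
  using assms unfolding is_dag_def by blast+

definition openp :: "'a set \<Rightarrow> ('a \<Rightarrow> 'a \<Rightarrow> bool) \<Rightarrow> 'a set \<Rightarrow> 'a set \<Rightarrow> 'a list \<Rightarrow> bool" where
  "openp G E C S xs \<longleftrightarrow> is_path G E xs \<and> last xs \<in> S
    \<and> \<not> (\<exists>j. 0 < j \<and> j + 1 < length xs \<and> E (xs ! j) (xs ! (j + 1)) \<and> xs ! j \<in> C)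
    \<and> \<not> (\<exists>j. 0 < j \<and> j + 1 < length xs \<and> E (xs ! (j - 1)) (xs ! j) \<and> E (xs ! (j + 1)) (xs ! j)
          \<and> xs ! j \<notin> C \<and> desc G E (xs ! j) \<inter> C = {})"

lemma open_cons:
  assumes op: "openp G E C S xs" and yG: "y \<in> G" and ed: "E y (hd xs) \<or> E (hd xs) y"
    and n2: "\<not> (Suc 0 < length xs \<and> E (xs!0) (xs!1) \<and> xs!0 \<in> C)"
    and n3: "\<not> (Suc 0 < length xs \<and> E y (xs!0) \<and> E (xs!1) (xs!0) \<and> xs!0 \<notin> C \<and> desc G E (xs!0) \<inter> C = {})"
  shows "openp G E C S (y # xs)"
proof -
  have ne: "xs \<noteq> []" using op unfolding openp_def is_path_def by blast
  have h0: "hd xs = xs ! 0" using ne by (simp add: hd_conv_nth)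
  have p: "is_path G E (y # xs)"
    unfolding is_path_def
  proof (intro conjI allI impI)
    show "y # xs \<noteq> []" by simp
    show "set (y # xs) \<subseteq> G" using op yG unfolding openp_def is_path_def by auto
    fix j assume j: "j + 1 < length (y # xs)"
    show "E ((y # xs) ! j) ((y # xs) ! (j + 1)) \<or> E ((y # xs) ! (j + 1)) ((y # xs) ! j)"
    proof (cases j)
      case 0 thus ?thesis using ed h0 by simp
    next
      case (Suc j') thus ?thesis using op j unfolding openp_def is_path_def by auto
    qed
  qed
  have l: "last (y # xs) \<in> S" using op ne unfolding openp_def by simp
  have b2: "\<not> (\<exists>j. 0 < j \<and> j + 1 < length (y#xs) \<and> E ((y#xs) ! j) ((y#xs) ! (j + 1)) \<and> (y#xs) ! j \<in> C)"
  proof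
    assume "\<exists>j. 0 < j \<and> j + 1 < length (y#xs) \<and> E ((y#xs) ! j) ((y#xs) ! (j + 1)) \<and> (y#xs) ! j \<in> C"
    then obtain j where j: "0 < j" "j + 1 < length (y#xs)" "E ((y#xs) ! j) ((y#xs) ! (j + 1))" "(y#xs) ! j \<in> C" by blast
    then obtain j' where jj: "j = Suc j'" by (cases j) auto
    show False
    proof (cases j')
      case 0 thus ?thesis using n2 j jj by simp
    next
      case (Suc k) thus ?thesis using op j jj unfolding openp_def by fastforce
    qed
  qed
  have b3: "\<not> (\<exists>j. 0 < j \<and> j + 1 < length (y#xs) \<and> E ((y#xs) ! (j - 1)) ((y#xs) ! j) \<and> E ((y#xs) ! (j + 1)) ((y#xs) ! j)
          \<and> (y#xs) ! j \<notin> C \<and> desc G E ((y#xs) ! j) \<inter> C = {})"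
  proof
    assume "\<exists>j. 0 < j \<and> j + 1 < length (y#xs) \<and> E ((y#xs) ! (j - 1)) ((y#xs) ! j) \<and> E ((y#xs) ! (j + 1)) ((y#xs) ! j)
          \<and> (y#xs) ! j \<notin> C \<and> desc G E ((y#xs) ! j) \<inter> C = {}"
    then obtain j where j: "0 < j" "j + 1 < length (y#xs)" "E ((y#xs) ! (j - 1)) ((y#xs) ! j)" "E ((y#xs) ! (j + 1)) ((y#xs) ! j)"
          "(y#xs) ! j \<notin> C" "desc G E ((y#xs) ! j) \<inter> C = {}" by blast
    then obtain j' where jj: "j = Suc j'" by (cases j) auto
    show False
    proof (cases j')
      case 0 thus ?thesis using n3 j jj by simp
    next
      case (Suc k)
      have "0 < j' \<and> j' + 1 < length xs \<and> E (xs ! (j' - 1)) (xs ! j') \<and> E (xs ! (j' + 1)) (xs ! j')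
          \<and> xs ! j' \<notin> C \<and> desc G E (xs ! j') \<inter> C = {}" using j jj Suc by simp
      thus ?thesis using op unfolding openp_def by blast
    qed
  qed
  show ?thesis unfolding openp_def using p l b2 b3 by blast
qed

definition good :: "'a set \<Rightarrow> ('a \<Rightarrow> 'a \<Rightarrow> bool) \<Rightarrow> 'a set \<Rightarrow> 'a set \<Rightarrow> 'a \<Rightarrow> bool" where
  "good G E C S x \<longleftrightarrow> (\<exists>xs. openp G E C S xs \<and> hd xs = x \<and>
     (Suc 0 < length xs \<longrightarrow> (E (xs!0) (xs!1) \<longrightarrow> x \<notin> C) \<and> (E (xs!1) (xs!0) \<longrightarrow> x \<in> C \<or> desc G E x \<inter> C \<noteq> {})))"

definition okc :: "'a set \<Rightarrow> ('a \<Rightarrow> 'a \<Rightarrow> bool) \<Rightarrow> 'a set \<Rightarrow> 'a set \<Rightarrow> 'a \<Rightarrow> bool" where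
  "okc G E C S x \<longleftrightarrow> (\<exists>xs. openp G E C S xs \<and> hd xs = x \<and>
     (Suc 0 < length xs \<longrightarrow> E (xs!0) (xs!1) \<longrightarrow> x \<notin> C))"

inductive KP for G :: "'a set" and E :: "'a \<Rightarrow> 'a \<Rightarrow> bool" and C S :: "'a set" where
  base: "s \<in> S \<Longrightarrow> KP G E C S s"
| par: "KP G E C S x \<Longrightarrow> E u x \<Longrightarrow> u \<in> G \<Longrightarrow> u \<notin> C \<Longrightarrow> KP G E C S u"
| ch: "KP G E C S x \<Longrightarrow> E x y \<Longrightarrow> y \<in> G \<Longrightarrow> c \<in> C \<Longrightarrow> E\<^sup>*\<^sup>* y c \<Longrightarrow> KP G E C S y"

lemma good_KK:
  assumes dag: "is_dag G E" and SG: "S \<subseteq> G" and CG: "C \<subseteq> G" and SC: "S \<inter> C = {}"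
    and x: "KP G E C S x"
  shows "good G E C S x"
  using x
proof (induction rule: KP.induct)
  case (base s)
  have "openp G E C S [s]" using base SG unfolding openp_def is_path_def by auto
  thus ?case unfolding good_def by (intro exI[of _ "[s]"]) simp
next
  case (par x u)
  then obtain xs where xs: "openp G E C S xs" "hd xs = x"
     "Suc 0 < length xs \<longrightarrow> (E (xs!0) (xs!1) \<longrightarrow> x \<notin> C) \<and> (E (xs!1) (xs!0) \<longrightarrow> x \<in> C \<or> desc G E x \<inter> C \<noteq> {})"
    unfolding good_def by blast
  have ne: "xs \<noteq> []" using xs unfolding openp_def is_path_def by blast
  have h0: "xs ! 0 = x" using ne xs by (simp add: hd_conv_nth)
  have "openp G E C S (u # xs)"
    by (rule open_cons) (use xs par h0 in auto)
  moreover have "\<not> E x u" using dag_asym[OF dag par(2)] .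
  ultimately show ?case unfolding good_def using par h0
    by (intro exI[of _ "u # xs"]) auto
next
  case (ch x y c)
  then obtain xs where xs: "openp G E C S xs" "hd xs = x"
     "Suc 0 < length xs \<longrightarrow> (E (xs!0) (xs!1) \<longrightarrow> x \<notin> C) \<and> (E (xs!1) (xs!0) \<longrightarrow> x \<in> C \<or> desc G E x \<inter> C \<noteq> {})"
    unfolding good_def by blast
  have ne: "xs \<noteq> []" using xs unfolding openp_def is_path_def by blast
  have h0: "xs ! 0 = x" using ne xs by (simp add: hd_conv_nth)
  have nyx: "\<not> E y x" using dag_asym[OF dag ch(2)] .
  have "openp G E C S (y # xs)"
    by (rule open_cons) (use xs ch h0 nyx in auto)
  moreover have "y \<in> C \<or> desc G E y \<inter> C \<noteq> {}"
  proof (cases "y = c")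
    case True thus ?thesis using ch by simp
  next
    case False
    have "c \<in> desc G E y" using False ch CG unfolding desc_def dlt_def dle_def by auto
    thus ?thesis using ch by blast
  qed
  ultimately show ?case unfolding good_def using ch h0 nyx
    by (intro exI[of _ "y # xs"]) auto
qed

lemma okc_desc:
  assumes dag: "is_dag G E" and ok: "okc G E C S x" and r: "E\<^sup>*\<^sup>* x y"
  shows "okc G E C S y"
  using r
proof induction
  case base thus ?case using ok .
next
  case (step y' y)
  then obtain xs where xs: "openp G E C S xs" "hd xs = y'"
     "Suc 0 < length xs \<longrightarrow> E (xs!0) (xs!1) \<longrightarrow> y' \<notin> C"
    unfolding okc_def by blast
  have ne: "xs \<noteq> []" using xs unfolding openp_def is_path_def by blast
  have h0: "xs ! 0 = y'" using ne xs by (simp add: hd_conv_nth)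
  have nyx: "\<not> E y y'" using dag_asym[OF dag step(2)] .
  have yG: "y \<in> G" using dag_G[OF dag step(2)] by simp
  have "openp G E C S (y # xs)"
    by (rule open_cons) (use xs step h0 nyx yG in auto)
  thus ?case unfolding okc_def using nyx h0 by (intro exI[of _ "y # xs"]) auto
qed

lemma KK_G: assumes "S \<subseteq> G" "KP G E C S x" shows "x \<in> G"
  using assms(2) by (induction rule: KP.induct) (use assms(1) in auto)

lemma KK_chain:
  assumes dag: "is_dag G E" and x: "KP G E C S x" and r: "E\<^sup>*\<^sup>* x y" and yc: "E\<^sup>*\<^sup>* y c" and c: "c \<in> C"
  shows "KP G E C S y"
  using r yc
proof (induction arbitrary: rule: rtranclp_induct)
  case base thus ?case using x by simp
next
  case (step y' y)
  have "E\<^sup>*\<^sup>* y' c" using step by (meson converse_rtranclp_into_rtranclp)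
  hence "KP G E C S y'" using step by blast
  thus ?case using KP.ch[OF _ step(2) dag_G(2)[OF dag step(2)] c step(4)] by blast
qed

lemma KK_closed:
  assumes dag: "is_dag G E" and SG: "S \<subseteq> G"
  shows "closed_set G E {x. KP G E C S x}"
  unfolding closed_set_def mem_Collect_eq
proof (intro allI impI)
  fix s t k assume a: "KP G E C S s \<and> KP G E C S t \<and> k \<in> G \<and> dle G E s k \<and> dle G E k t"
  have "E\<^sup>*\<^sup>* k t" "E\<^sup>*\<^sup>* s k" using a unfolding dle_def by auto
  thus "KP G E C S k" using a
  proof (induction arbitrary: rule: converse_rtranclp_induct)
    case base thus ?case by blast
  next
    case (step y z)
    have zG: "z \<in> G" using dag_G(2)[OF dag step(1)] .
    have sz: "E\<^sup>*\<^sup>* s z" using step by (meson rtranclp.rtrancl_into_rtrancl)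
    have "dle G E s z" "dle G E z t" using sz step zG unfolding dle_def by auto
    hence zK: "KP G E C S z" using step zG sz by blast
    show ?case
    proof (cases "y \<in> C")
      case True
      thus ?thesis using KK_chain[OF dag _ step(4) rtranclp.rtrancl_refl True] step by blast
    next
      case False
      show ?thesis using KP.par[OF zK step(1) dag_G(1)[OF dag step(1)] False] .
    qed
  qed
qed


lemma sep_of_K:
  assumes dag: "is_dag G E"
    and KG: "K \<subseteq> G" and cl: "closed_set G E K" and SK: "S \<subseteq> K" and PC: "parS G E K \<subseteq> C"
    and IN: "I \<subseteq> nonDP G E K" and DC: "descS G E K \<inter> C = {}"
  shows "AD_separated G E I S C"
  unfolding AD_separated_def
proof (intro allI impI)
  fix xs assume a: "is_path G E xs \<and> hd xs \<in> I \<and> last xs \<in> S"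
  have ne: "xs \<noteq> []" and setG: "set xs \<subseteq> G" using a unfolding is_path_def by auto
  have edge: "\<And>j. j + 1 < length xs \<Longrightarrow> E (xs ! j) (xs ! (j + 1)) \<or> E (xs ! (j + 1)) (xs ! j)"
    using a unfolding is_path_def by blast
  have nG: "\<And>j. j < length xs \<Longrightarrow> xs ! j \<in> G" using setG by auto
  have hdI: "xs ! 0 \<in> nonDP G E K" using a IN ne by (auto simp: hd_conv_nth)
  hence h0: "xs ! 0 \<notin> K" "xs ! 0 \<notin> descS G E K" "xs ! 0 \<notin> parS G E K"
    unfolding nonDP_def nonD_def by auto
  have ex: "\<exists>j. j < length xs \<and> xs ! j \<in> K"
    using a SK ne by (intro exI[of _ "length xs - 1"]) (auto simp: last_conv_nth)
  define j where "j = (LEAST j. j < length xs \<and> xs ! j \<in> K)"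
  have jl: "j < length xs" "xs ! j \<in> K" using LeastI_ex[OF ex] unfolding j_def by auto
  have jmin: "\<And>k. k < j \<Longrightarrow> xs ! k \<notin> K"
    using jl(1) not_less_Least unfolding j_def by (metis order.strict_trans)
  have "j \<noteq> 0"
  proof assume "j = 0" thus False using h0(1) jl(2) by simp qed
  then obtain j' where jj: "j = Suc j'" by (cases j) auto
  have claim: "\<And>k. k < j \<Longrightarrow> xs ! k \<in> descS G E K \<Longrightarrow> E (xs ! (k + 1)) (xs ! k) \<Longrightarrow> blocked G E C xs"
  proof -
    fix k show "k < j \<Longrightarrow> xs ! k \<in> descS G E K \<Longrightarrow> E (xs ! (k + 1)) (xs ! k) \<Longrightarrow> blocked G E C xs"
    proof (induction k)
      case 0 thus ?case using h0 by simp
    next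
      case (Suc k)
      have kl: "k + 1 < length xs" using Suc.prems jl by simp
      from Suc.prems(2) obtain k0 where k0: "k0 \<in> K" "xs ! Suc k \<in> desc G E k0" "xs ! Suc k \<notin> K"
        unfolding descS_def by auto
      have k0r: "E\<^sup>*\<^sup>* k0 (xs ! Suc k)" "k0 \<in> G" using k0 unfolding desc_def dlt_def dle_def by auto
      have nC: "xs ! Suc k \<notin> C" using Suc.prems(2) DC by blast
      show ?case
      proof (cases "E (xs ! Suc k) (xs ! k)")
        case True
        have "xs ! k \<notin> K" using jmin Suc.prems by simp
        hence "xs ! k \<in> desc G E k0" using k0r True nG[of k] kl k0(1)
          unfolding desc_def dlt_def dle_def by (auto intro: rtranclp.rtrancl_into_rtrancl)
        hence "xs ! k \<in> descS G E K" using \<open>xs ! k \<notin> K\<close> k0(1) unfolding descS_def by auto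
        thus ?thesis using Suc True by simp
      next
        case False
        hence e1: "E (xs ! k) (xs ! Suc k)" using edge[OF kl] by simp
        have dC: "desc G E (xs ! Suc k) \<inter> C = {}"
        proof (rule ccontr)
          assume "desc G E (xs ! Suc k) \<inter> C \<noteq> {}"
          then obtain v where v: "v \<in> desc G E (xs ! Suc k)" "v \<in> C" by blast
          have vr: "E\<^sup>*\<^sup>* (xs ! Suc k) v" "v \<in> G" using v unfolding desc_def dlt_def dle_def by auto
          show False
          proof (cases "v \<in> K")
            case True
            have d1: "dle G E k0 (xs ! Suc k)" "dle G E (xs ! Suc k) v"
              using k0r vr nG[of "Suc k"] kl unfolding dle_def by auto
            have "xs ! Suc k \<in> K"
              using cl[unfolded closed_set_def, rule_format, of k0 v "xs ! Suc k"] d1 k0(1) True nG[of "Suc k"] kl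
              by simp
            thus False using k0 by simp
          next
            case False
            have "v \<in> desc G E k0" using vr k0r False k0(1)
              unfolding desc_def dlt_def dle_def by (auto intro: rtranclp_trans)
            hence "v \<in> descS G E K" using False k0(1) unfolding descS_def by auto
            thus False using v DC by blast
          qed
        qed
        have "0 < Suc k \<and> Suc k + 1 < length xs \<and> E (xs ! (Suc k - 1)) (xs ! Suc k) \<and> E (xs ! (Suc k + 1)) (xs ! Suc k)
          \<and> xs ! Suc k \<notin> C \<and> desc G E (xs ! Suc k) \<inter> C = {}"
          using e1 Suc.prems jl nC dC by simp
        thus ?thesis unfolding blocked_def by blast
      qed
    qed
  qed
  have jl': "j' + 1 < length xs" using jj jl by simp
  show "blocked G E C xs"
  proof (cases "E (xs ! j') (xs ! (j' + 1))")
    case True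
    have "xs ! j' \<in> parS G E K" using True jj jl jmin[of j'] nG[of j'] jl'
      unfolding parS_def par_def by auto
    hence inC: "xs ! j' \<in> C" using PC by blast
    have "j' \<noteq> 0"
    proof assume "j' = 0" thus False using h0(3) \<open>xs ! j' \<in> parS G E K\<close> by simp qed
    hence "0 < j' \<and> j' + 1 < length xs \<and> E (xs ! j') (xs ! (j' + 1)) \<and> xs ! j' \<in> C"
      using True inC jl' by simp
    thus ?thesis unfolding blocked_def by blast
  next
    case False
    hence e: "E (xs ! j) (xs ! j')" using edge[OF jl'] jj by simp
    have "xs ! j' \<in> desc G E (xs ! j)" using e jmin[of j'] jj jl nG[of j'] nG[of j] jl'
      unfolding desc_def dlt_def dle_def by auto
    hence "xs ! j' \<in> descS G E K" using jl jmin[of j'] jj unfolding descS_def by auto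
    moreover have "j' < j" "E (xs ! (j' + 1)) (xs ! j')" using jj e by simp_all
    ultimately show ?thesis using claim[of j'] by blast
  qed
qed

lemma good_okc: assumes "good G E C S x" shows "okc G E C S x"
proof -
  obtain xs where xs: "openp G E C S xs" "hd xs = x"
     "Suc 0 < length xs \<longrightarrow> (E (xs!0) (xs!1) \<longrightarrow> x \<notin> C) \<and> (E (xs!1) (xs!0) \<longrightarrow> x \<in> C \<or> desc G E x \<inter> C \<noteq> {})"
    using assms unfolding good_def by blast
  show ?thesis unfolding okc_def using xs by (intro exI[of _ xs]) simp
qed

theorem proposition2:
  fixes G :: "'a set" and E :: "'a \<Rightarrow> 'a \<Rightarrow> bool" and I S C :: "'a set"
  assumes "is_dag G E"
    and "I \<subseteq> G" and "S \<subseteq> G" and "C \<subseteq> G"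
    and "I \<inter> S = {}" and "I \<inter> C = {}" and "S \<inter> C = {}"
  shows "AD_separated G E I S C \<longleftrightarrow>
    (\<exists>K. K \<subseteq> G \<and> closed_set G E K \<and> S \<subseteq> K \<and> parS G E K \<subseteq> C
         \<and> I \<subseteq> nonDP G E K \<and> descS G E K \<inter> C = {})"
proof
  assume sep: "AD_separated G E I S C"
  note dag = assms(1)
  define K where "K = {x. KP G E C S x}"
  have KG: "K \<subseteq> G" unfolding K_def using KK_G[OF assms(3)] by auto
  have cl: "closed_set G E K" unfolding K_def using KK_closed[OF dag assms(3)] .
  have SK: "S \<subseteq> K" unfolding K_def by (auto intro: KP.base)
  have PC: "parS G E K \<subseteq> C"
  proof
    fix u assume "u \<in> parS G E K"
    then obtain x where x: "x \<in> K" "u \<in> G" "E u x" "u \<notin> K" unfolding parS_def par_def by auto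
    show "u \<in> C"
    proof (rule ccontr)
      assume "u \<notin> C"
      hence "KP G E C S u" using KP.par[of G E C S x u] x unfolding K_def by simp
      thus False using x unfolding K_def by simp
    qed
  qed
  have DC: "descS G E K \<inter> C = {}"
  proof (rule ccontr)
    assume "descS G E K \<inter> C \<noteq> {}"
    then obtain v k0 where v: "v \<in> C" "k0 \<in> K" "v \<in> desc G E k0" "v \<notin> K"
      unfolding descS_def by auto
    have "E\<^sup>*\<^sup>* k0 v" using v unfolding desc_def dlt_def dle_def by auto
    hence "KP G E C S v" using KK_chain[OF dag _ _ rtranclp.rtrancl_refl v(1)] v unfolding K_def by auto
    thus False using v unfolding K_def by simp
  qed
  have nb: "\<And>i. i \<in> I \<Longrightarrow> okc G E C S i \<Longrightarrow> False"
  proof -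
    fix i assume i: "i \<in> I" "okc G E C S i"
    then obtain xs where xs: "openp G E C S xs" "hd xs = i" unfolding okc_def by blast
    have p: "is_path G E xs" and l: "last xs \<in> S"
      and n2: "\<not> (\<exists>j. 0 < j \<and> j + 1 < length xs \<and> E (xs ! j) (xs ! (j + 1)) \<and> xs ! j \<in> C)"
      and n3: "\<not> (\<exists>j. 0 < j \<and> j + 1 < length xs \<and> E (xs ! (j - 1)) (xs ! j) \<and> E (xs ! (j + 1)) (xs ! j)
          \<and> xs ! j \<notin> C \<and> desc G E (xs ! j) \<inter> C = {})"
      using xs(1) unfolding openp_def by auto
    have "blocked G E C xs" using sep p l i xs(2) unfolding AD_separated_def by blast
    moreover have "hd xs \<notin> C" using i xs(2) assms(6) by blast
    moreover have "last xs \<notin> C" using l assms(7) by blast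
    ultimately show False using n2 n3 unfolding blocked_def by (elim disjE) auto
  qed
  have IN: "I \<subseteq> nonDP G E K"
  proof
    fix i assume i: "i \<in> I"
    have nK: "i \<notin> K"
    proof
      assume "i \<in> K"
      hence "good G E C S i" using good_KK[OF dag assms(3,4,7)] unfolding K_def by simp
      hence "okc G E C S i" by (rule good_okc)
      thus False using nb i by blast
    qed
    have nD: "i \<notin> descS G E K"
    proof
      assume "i \<in> descS G E K"
      then obtain k0 where k0: "k0 \<in> K" "i \<in> desc G E k0" unfolding descS_def by auto
      have "good G E C S k0" using good_KK[OF dag assms(3,4,7)] k0 unfolding K_def by simp
      hence "okc G E C S k0" by (rule good_okc)
      moreover have "E\<^sup>*\<^sup>* k0 i" using k0 unfolding desc_def dlt_def dle_def by auto
      ultimately have "okc G E C S i" using okc_desc[OF dag] by blast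
      thus False using nb i by blast
    qed
    have "i \<notin> parS G E K" using PC i assms(6) by blast
    thus "i \<in> nonDP G E K" using nK nD i assms(2) unfolding nonDP_def nonD_def by blast
  qed
  show "\<exists>K. K \<subseteq> G \<and> closed_set G E K \<and> S \<subseteq> K \<and> parS G E K \<subseteq> C
         \<and> I \<subseteq> nonDP G E K \<and> descS G E K \<inter> C = {}"
    using KG cl SK PC IN DC by (intro exI[of _ K]) simp
next
  assume "\<exists>K. K \<subseteq> G \<and> closed_set G E K \<and> S \<subseteq> K \<and> parS G E K \<subseteq> C
         \<and> I \<subseteq> nonDP G E K \<and> descS G E K \<inter> C = {}"
  then obtain K where "K \<subseteq> G" "closed_set G E K" "S \<subseteq> K" "parS G E K \<subseteq> C"
         "I \<subseteq> nonDP G E K" "descS G E K \<inter> C = {}" by blast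
  thus "AD_separated G E I S C" by (rule sep_of_K[OF assms(1)])
qed

end
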